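(* For every $t>0$ and every fixed 2-dimensional linear subspace $L$, $$\mathrm{Cov}_V\bigl(\overline{\mathrm{cr}}(G_L),\mathrm{stress}(G,G_L)\bigr)\ge\frac{t^5}{16}\int_W I_W(v)\int_W w(v,v_1)\bigl(d_0(v,v_1)-d_L(v,v_1)\bigr)^2\,dv_1\,dv,$$ where $$I_W(v)=\int_{W^3}\mathbf 1\bigl([v,v_2]|_L\cap[v_3,v_4]|_L\neq\emptyset\bigr)\mathbf 1(\|v-v_2\|\le\delta_t)\mathbf 1(\|v_3-v_4\|\le\delta_t)\,dv_2dv_3dv_4.$$
   Context: Let $W\subset\mathbb{R}^d$ ($d\ge2$) be a compact convex set with $\mathrm{vol}_d(W)=1$; for $t>0$, $V$ is a Poisson point process of intensity $t$ on $W$ (draw $N\sim\mathrm{Poisson}(t)$, then $N$ i.i.d. uniform points in $W$); $\delta_t>0$. The graph $G$ has vertex set $V$ and a straight-segment edge between distinct $u,v\in V$ iff $\|u-v\|\le\delta_t$. For a 2-dimensional linear subspace $L$, $x|_L$ denotes orthogonal projection onto $L$, $[u,v]$ the segment from $u$ to $v$, and $V^k_{\neq}$ ordered $k$-tuples of pairwise distinct points of $V$. Define $$\overline{\mathrm{cr}}(G_L)=\tfrac18\sum_{(v_1,\dots,v_4)\in V^4_{\neq}}\mathbf 1\bigl([v_1,v_2]|_L\cap[v_3,v_4]|_L\neq\emptyset\bigr)\mathbf 1(\|v_1-v_2\|\le\delta_t)\mathbf 1(\|v_3-v_4\|\le\delta_t),$$ $$\mathrm{stress}(G,G_L)=\tfrac12\sum_{(v_1,v_2)\in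 V^2_{\neq}}w(v_1,v_2)\bigl(d_0(v_1,v_2)-d_L(v_1,v_2)\bigr)^2,$$ with $w:W\times W\to(0,\infty)$ measurable, $d_0(v_1,v_2)=\|v_1-v_2\|$, $d_L(v_1,v_2)=\|v_1|_L-v_2|_L\|$. Assume $\mathrm{stress}(G,G_L)$ has finite second moment. *)

theory Defs
  imports "HOL-Analysis.Analysis" "HOL-Probability.Probability"
begin

definition proj :: "'a::euclidean_space set \<Rightarrow> 'a \<Rightarrow> 'a" where
  "proj L x = (THE y. y \<in> L \<and> (\<forall>z\<in>L. inner (x - y) z = 0))"

text \<open>Poisson point process of intensity t on W (with vol W = 1):
  outcome (N, X) with N ~ Poisson(t), X i.i.d. uniform on W, independent;
  the point set is V = {X i | i < N}.\<close>
definition ppp :: "real \<Rightarrow> 'a::euclidean_space set \<Rightarrow> (nat \<times> (nat \<Rightarrow> 'a)) measure" where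
  "ppp t W = measure_pmf (poisson_pmf t) \<Otimes>\<^sub>M (\<Pi>\<^sub>M i\<in>UNIV. uniform_measure lborel W)"

definition cr_bar :: "'a::euclidean_space set \<Rightarrow> real \<Rightarrow> nat \<times> (nat \<Rightarrow> 'a) \<Rightarrow> real" where
  "cr_bar L \<delta> \<omega> = (case \<omega> of (N, X) \<Rightarrow>
     1/8 * (\<Sum>(i,j,k,l) \<in> {(i,j,k,l). i < N \<and> j < N \<and> k < N \<and> l < N \<and> distinct [i,j,k,l]}.
        of_bool (proj L ` closed_segment (X i) (X j) \<inter> proj L ` closed_segment (X k) (X l) \<noteq> {})
        * of_bool (norm (X i - X j) \<le> \<delta>) * of_bool (norm (X k - X l) \<le> \<delta>)))"

definition stress :: "'a::euclidean_space set \<Rightarrow> ('a \<Rightarrow> 'a \<Rightarrow> real) \<Rightarrow> nat \<times> (nat \<Rightarrow> 'a) \<Rightarrow> real" where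
  "stress L w \<omega> = (case \<omega> of (N, X) \<Rightarrow>
     1/2 * (\<Sum>(i,j) \<in> {(i,j). i < N \<and> j < N \<and> i \<noteq> j}.
        w (X i) (X j) * (norm (X i - X j) - norm (proj L (X i) - proj L (X j)))\<^sup>2))"

definition cov :: "'b measure \<Rightarrow> ('b \<Rightarrow> real) \<Rightarrow> ('b \<Rightarrow> real) \<Rightarrow> real" where
  "cov M X Y = (\<integral>\<omega>. (X \<omega> - (\<integral>x. X x \<partial>M)) * (Y \<omega> - (\<integral>x. Y x \<partial>M)) \<partial>M)"

definition I_W :: "'a::euclidean_space set \<Rightarrow> 'a set \<Rightarrow> real \<Rightarrow> 'a \<Rightarrow> real" where
  "I_W W L \<delta> v = (LINT v2:W|lborel. LINT v3:W|lborel. LINT v4:W|lborel.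
      of_bool (proj L ` closed_segment v v2 \<inter> proj L ` closed_segment v3 v4 \<noteq> {})
      * of_bool (norm (v - v2) \<le> \<delta>) * of_bool (norm (v3 - v4) \<le> \<delta>))"

end

theory Submission
  imports Defs
begin


definition Inj :: "nat \<Rightarrow> nat \<Rightarrow> nat list set" where
  "Inj m n = {xs. length xs = m \<and> distinct xs \<and> set xs \<subseteq> {..<n}}"

lemma finite_Inj: "finite (Inj m n)"
proof -
  have "Inj m n \<subseteq> {xs. set xs \<subseteq> {..<n} \<and> length xs = m}" unfolding Inj_def by blast
  moreover have "finite {xs. set xs \<subseteq> {..<n} \<and> length xs = m}"
    by (rule finite_lists_length_eq) simp
  ultimately show ?thesis by (rule finite_subset)
qed

lemma card_Inj_fact: "real (card (Inj m n)) = (if m \<le> n then fact n / fact (n - m) else 0)"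
proof (cases "m \<le> n")
  case True
  have "card (Inj m n) = \<Prod>{n - m + 1 .. n}"
    using card_lists_distinct_length_eq[of "{..<n}" m] True unfolding Inj_def by simp
  moreover have "(fact n :: nat) = fact (n - m) * (\<Prod>{Suc (n - m) .. n})"
    by (rule fact_eq_fact_times) simp
  then have "(fact n :: real) = fact (n - m) * real (\<Prod>{Suc (n - m) .. n})"
    by (metis of_nat_fact of_nat_mult)
  ultimately show ?thesis using True by simp
next
  case False
  have "Inj m n = {}"
  proof (rule ccontr)
    assume "Inj m n \<noteq> {}"
    then obtain xs where xs: "length xs = m" "distinct xs" "set xs \<subseteq> {..<n}" unfolding Inj_def by blast
    have "card (set xs) \<le> card {..<n}" using xs(3) by (rule card_mono[rotated]) simp
    then show False using xs False distinct_card[of xs] by simp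
  qed
  then show ?thesis using False by simp
qed

lemma poisson_card_Inj:
  assumes t: "t > 0"
  shows "(\<integral>\<^sup>+ n. ennreal (real (card (Inj m n))) \<partial>measure_pmf (poisson_pmf t)) = ennreal (t ^ m)"
proof -
  define a where "a n = pmf (poisson_pmf t) n * real (card (Inj m n))" for n
  have a0: "a n = 0" if "n < m" for n using that by (simp add: a_def card_Inj_fact)
  have ashift: "a (k + m) = t ^ m * exp (-t) * (t ^ k / fact k)" for k
    using t by (simp add: a_def card_Inj_fact power_add)
  have "(\<lambda>k. t ^ k /\<^sub>R fact k) sums exp t" by (rule exp_converges)
  then have "(\<lambda>k. t ^ k / fact k) sums exp t" by (simp add: divide_inverse_commute)
  then have "(\<lambda>k. t ^ m * exp (-t) * (t ^ k / fact k)) sums (t ^ m * exp (-t) * exp t)"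
    by (rule sums_mult)
  moreover have "t ^ m * exp (-t) * exp t = t ^ m"
    by (simp add: mult.assoc exp_minus_inverse[of t, unfolded mult.commute[of "exp t"]])
  ultimately have "(\<lambda>k. a (k + m)) sums (t ^ m)" by (simp add: ashift)
  then have "a sums (t ^ m + (\<Sum>i<m. a i))" by (simp add: sums_iff_shift)
  then have as: "a sums (t ^ m)" by (simp add: a0)
  have anonneg: "0 \<le> a n" for n unfolding a_def by simp
  have "(\<integral>\<^sup>+ n. ennreal (real (card (Inj m n))) \<partial>measure_pmf (poisson_pmf t))
      = (\<integral>\<^sup>+ n. ennreal (a n) \<partial>count_space UNIV)"
    unfolding nn_integral_measure_pmf a_def by (simp add: ennreal_mult)
  also have "\<dots> = (\<Sum>n. ennreal (a n))" by (rule nn_integral_count_space_nat)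
  also have "\<dots> = ennreal (t ^ m)"
    using as anonneg t by (intro sums_unique[symmetric]) simp
  finally show ?thesis .
qed

section \<open>Projection\<close>

lemma proj_formula:
  fixes L :: "'a::euclidean_space set"
  assumes L: "subspace L"
  obtains B where "finite B" "\<And>x. proj L x = (\<Sum>b\<in>B. (x \<bullet> b) *\<^sub>R b)"
proof -
  obtain B where B: "B \<subseteq> L" "pairwise orthogonal B" "\<And>x. x \<in> B \<Longrightarrow> norm x = 1"
       "independent B" "span B = L"
    using orthonormal_basis_subspace[OF L] by metis
  have fin: "finite B" using B(4) by (rule independent_imp_finite)
  have bb: "b \<bullet> b = 1" if "b \<in> B" for b using B(3)[OF that] by (simp add: norm_eq_1)
  have bc: "b \<bullet> c = 0" if "b \<in> B" "c \<in> B" "b \<noteq> c" for b c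
    using B(2) that unfolding pairwise_def orthogonal_def by blast
  have main: "proj L x = (\<Sum>b\<in>B. (x \<bullet> b) *\<^sub>R b)" for x
  proof -
    define P where "P = (\<Sum>b\<in>B. (x \<bullet> b) *\<^sub>R b)"
    have PL: "P \<in> L" unfolding P_def B(5)[symmetric]
      by (intro span_sum span_scale span_base) auto
    have orthB: "(x - P) \<bullet> c = 0" if c: "c \<in> B" for c
    proof -
      have "P \<bullet> c = (\<Sum>b\<in>B. (x \<bullet> b) * (b \<bullet> c))" unfolding P_def
        by (simp add: inner_sum_left)
      also have "\<dots> = (\<Sum>b\<in>{c}. (x \<bullet> b) * (b \<bullet> c))"
        using c fin by (intro sum.mono_neutral_right) (auto simp: bc)
      also have "\<dots> = x \<bullet> c" using bb[OF c] by simp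
      finally show ?thesis by (simp add: inner_diff_left)
    qed
    have orth: "(x - P) \<bullet> z = 0" if "z \<in> L" for z
    proof -
      have "orthogonal (x - P) z"
        by (rule orthogonal_to_span) (use that B(5) orthB in \<open>auto simp: orthogonal_def\<close>)
      then show ?thesis by (simp add: orthogonal_def)
    qed
    have uniq: "y = P" if y: "y \<in> L" "\<forall>z\<in>L. (x - y) \<bullet> z = 0" for y
    proof -
      have d: "y - P \<in> L" using y(1) PL L by (simp add: subspace_diff)
      have "(x - P) \<bullet> (y - P) - (x - y) \<bullet> (y - P) = 0" using orth[OF d] y(2) d by simp
      then have "(y - P) \<bullet> (y - P) = 0" by (simp add: inner_diff_left inner_diff_right inner_commute)
      then show ?thesis by simp
    qed
    have "proj L x = P" unfolding proj_def
      by (rule the1_equality) (use PL orth uniq in blast)+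
    then show ?thesis unfolding P_def .
  qed
  show ?thesis by (rule that[OF fin main])
qed

lemma continuous_proj:
  fixes L :: "'a::euclidean_space set"
  assumes L: "subspace L"
  shows "continuous_on UNIV (proj L)"
proof -
  obtain B where B: "finite B" "\<And>x. proj L x = (\<Sum>b\<in>B. (x \<bullet> b) *\<^sub>R b)"
    using proj_formula[OF L] by blast
  have "continuous_on UNIV (\<lambda>x. \<Sum>b\<in>B. (x \<bullet> b) *\<^sub>R b)"
    by (intro continuous_intros)
  then show ?thesis using B(2) by (simp add: fun_eq_iff)
qed

definition fr :: "'a::euclidean_space set \<Rightarrow> real \<Rightarrow> 'a \<Rightarrow> 'a \<Rightarrow> 'a \<Rightarrow> 'a \<Rightarrow> real" where
  "fr L \<delta> a b c d = of_bool (proj L ` closed_segment a b \<inter> proj L ` closed_segment c d \<noteq> {})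
        * of_bool (norm (a - b) \<le> \<delta>) * of_bool (norm (c - d) \<le> \<delta>)"

lemma fr_nonneg: "0 \<le> fr L \<delta> a b c d" unfolding fr_def by simp
lemma fr_le1: "fr L \<delta> a b c d \<le> 1" unfolding fr_def by simp

lemma segs_meet_iff:
  "(P ` closed_segment a b \<inter> P ` closed_segment c d \<noteq> {}) \<longleftrightarrow>
   (\<exists>u v. (u, v) \<in> {0..1::real} \<times> {0..1::real} \<and> P ((1 - u) *\<^sub>R a + u *\<^sub>R b) = P ((1 - v) *\<^sub>R c + v *\<^sub>R d))"
  unfolding closed_segment_def by fastforce

lemma closed_segs_meet:
  fixes L :: "'a::euclidean_space set"
  assumes L: "subspace L"
  shows "closed {p :: 'a \<times> 'a \<times> 'a \<times> 'a. proj L ` closed_segment (fst p) (fst (snd p)) \<inter>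
             proj L ` closed_segment (fst (snd (snd p))) (snd (snd (snd p))) \<noteq> {}}"
proof -
  have cP: "continuous_on UNIV (proj L)" by (rule continuous_proj[OF L])
  let ?T = "{(uv :: real \<times> real, p :: 'a \<times> 'a \<times> 'a \<times> 'a).
       proj L ((1 - fst uv) *\<^sub>R fst p + fst uv *\<^sub>R fst (snd p)) =
       proj L ((1 - snd uv) *\<^sub>R fst (snd (snd p)) + snd uv *\<^sub>R snd (snd (snd p)))}"
  have cT: "closed ?T"
    unfolding case_prod_unfold
    by (intro closed_Collect_eq continuous_on_compose2[OF cP] continuous_intros) auto
  have "closed {p. \<exists>x. x \<in> {0..1::real} \<times> {0..1::real} \<and> (x, p) \<in> ?T}"
    by (rule closed_compact_projection[OF compact_Times[OF compact_Icc compact_Icc] cT])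
  moreover have "{p :: 'a \<times> 'a \<times> 'a \<times> 'a. proj L ` closed_segment (fst p) (fst (snd p)) \<inter>
             proj L ` closed_segment (fst (snd (snd p))) (snd (snd (snd p))) \<noteq> {}}
     = {p. \<exists>x. x \<in> {0..1::real} \<times> {0..1::real} \<and> (x, p) \<in> ?T}"
    unfolding segs_meet_iff by auto
  ultimately show ?thesis by simp
qed

lemma fr_measurable:
  fixes L :: "'a::euclidean_space set"
  assumes L: "subspace L"
    and a: "a \<in> borel_measurable M" and b: "b \<in> borel_measurable M"
    and c: "c \<in> borel_measurable M" and d: "d \<in> borel_measurable M"
  shows "(\<lambda>x. fr L \<delta> (a x) (b x) (c x) (d x)) \<in> borel_measurable M"
proof -
  define S where "S = {p :: 'a \<times> 'a \<times> 'a \<times> 'a. proj L ` closed_segment (fst p) (fst (snd p)) \<inter>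
             proj L ` closed_segment (fst (snd (snd p))) (snd (snd (snd p))) \<noteq> {}}"
  define C where "C = {p :: 'a \<times> 'a. norm (fst p - snd p) \<le> \<delta>}"
  have S: "S \<in> sets borel" unfolding S_def by (rule borel_closed[OF closed_segs_meet[OF L]])
  have Cc: "closed C" unfolding C_def by (intro closed_Collect_le continuous_intros)
  have C: "C \<in> sets borel" by (rule borel_closed[OF Cc])
  have tup: "(\<lambda>x. (a x, b x, c x, d x)) \<in> borel_measurable M"
    using a b c d by (intro borel_measurable_Pair)
  have ab: "(\<lambda>x. (a x, b x)) \<in> borel_measurable M" using a b by (intro borel_measurable_Pair)
  have cd: "(\<lambda>x. (c x, d x)) \<in> borel_measurable M" using c d by (intro borel_measurable_Pair)
  have m1: "(\<lambda>x. indicator S (a x, b x, c x, d x) :: real) \<in> borel_measurable M"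
    using measurable_compose[OF tup borel_measurable_indicator[OF S]] by (simp add: o_def)
  have m2: "(\<lambda>x. indicator C (a x, b x) :: real) \<in> borel_measurable M"
    using measurable_compose[OF ab borel_measurable_indicator[OF C]] by (simp add: o_def)
  have m3: "(\<lambda>x. indicator C (c x, d x) :: real) \<in> borel_measurable M"
    using measurable_compose[OF cd borel_measurable_indicator[OF C]] by (simp add: o_def)
  have eq: "fr L \<delta> (a x) (b x) (c x) (d x) = indicator S (a x, b x, c x, d x) * indicator C (a x, b x) * indicator C (c x, d x)" for x
    unfolding fr_def S_def C_def by (simp add: indicator_def)
  show ?thesis unfolding eq using m1 m2 m3 by (intro borel_measurable_times)
qed

lemma meas_pmf_pair:
  fixes h :: "nat \<times> 'b \<Rightarrow> 'c"
  assumes "\<And>n. (\<lambda>X. h (n, X)) \<in> measurable N K"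
  shows "h \<in> measurable (measure_pmf p \<Otimes>\<^sub>M N) K"
proof -
  have "sets (measure_pmf p \<Otimes>\<^sub>M N) = sets (count_space UNIV \<Otimes>\<^sub>M N)"
    by (rule sets_pair_measure_cong) simp_all
  then have "measurable (measure_pmf p \<Otimes>\<^sub>M N) K = measurable (count_space UNIV \<Otimes>\<^sub>M N) K"
    by (rule measurable_cong_sets) simp
  moreover have "h \<in> measurable (count_space UNIV \<Otimes>\<^sub>M N) K"
    by (rule measurable_pair_measure_countable1) (use assms in auto)
  ultimately show ?thesis by simp
qed

context
  fixes W :: "'a::euclidean_space set" and t :: real
  assumes Wb: "W \<in> sets borel" and W1: "emeasure lborel W = 1" and tpos: "t > 0"
begin

lemma U_prob: "prob_space (uniform_measure lborel W)"
  by (rule prob_space_uniform_measure) (simp_all add: W1)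

lemma U_sf: "sigma_finite_measure (uniform_measure lborel W)"
proof -
  interpret prob_space "uniform_measure lborel W" by (rule U_prob)
  show ?thesis by unfold_locales
qed

lemma PiM_prob: "prob_space (PiM I (\<lambda>_. uniform_measure lborel W))"
  by (intro prob_space_PiM U_prob)

lemma PiM_sf: "sigma_finite_measure (PiM I (\<lambda>_. uniform_measure lborel W))"
proof -
  interpret prob_space "PiM I (\<lambda>_. uniform_measure lborel W)" by (rule PiM_prob)
  show ?thesis by unfold_locales
qed

lemma U_psf: "product_sigma_finite (\<lambda>_::nat. uniform_measure lborel W)"
  by (simp add: product_sigma_finite_def U_sf)

lemmas U_nn_meas[measurable (raw)] = sigma_finite_measure.borel_measurable_nn_integral[OF U_sf]

lemma ppp_sum_Inj:
  fixes \<psi> :: "(nat \<Rightarrow> 'a) \<Rightarrow> ennreal"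
  assumes \<psi>[measurable]: "\<psi> \<in> borel_measurable (PiM {..<m} (\<lambda>_. uniform_measure lborel W))"
  shows "(\<integral>\<^sup>+\<omega>. (\<Sum>xs\<in>Inj m (fst \<omega>). \<psi> (\<lambda>i\<in>{..<m}. snd \<omega> (xs!i))) \<partial>ppp t W)
       = ennreal (t^m) * (\<integral>\<^sup>+y. \<psi> y \<partial>PiM {..<m} (\<lambda>_. uniform_measure lborel W))"
proof -
  let ?U = "uniform_measure lborel W"
  let ?M = "PiM UNIV (\<lambda>_::nat. ?U)"
  let ?C = "\<integral>\<^sup>+y. \<psi> y \<partial>PiM {..<m} (\<lambda>_. ?U)"
  interpret M: prob_space ?M by (rule PiM_prob)
  have mt: "(\<lambda>\<omega>. \<lambda>i\<in>{..<m}. \<omega> (xs!i)) \<in> measurable ?M (PiM {..<m} (\<lambda>i. ?U))" for xs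
    by measurable
  have mterm: "(\<lambda>X. \<psi> (\<lambda>i\<in>{..<m}. X (xs!i))) \<in> borel_measurable ?M" for xs
    using measurable_compose[OF mt \<psi>] by (simp add: o_def)
  have reidx: "(\<integral>\<^sup>+X. \<psi> (\<lambda>i\<in>{..<m}. X (xs!i)) \<partial>?M) = ?C" if xs: "xs \<in> Inj m n" for xs n
  proof -
    have inj: "inj_on (nth xs) {..<m}" using xs by (intro inj_on_nth) (auto simp: Inj_def)
    have d: "distr ?M (PiM {..<m} (\<lambda>i. ?U)) (\<lambda>\<omega>. \<lambda>i\<in>{..<m}. \<omega> (xs!i)) = PiM {..<m} (\<lambda>i. ?U)"
      using distr_PiM_reindex[of UNIV "\<lambda>_. ?U" "nth xs" "{..<m}"] inj U_prob by simp
    show ?thesis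
      using nn_integral_distr[OF mt, of \<psi> xs] d by simp
  qed
  have meas: "(\<lambda>\<omega>. \<Sum>xs\<in>Inj m (fst \<omega>). \<psi> (\<lambda>i\<in>{..<m}. snd \<omega> (xs!i))) \<in> borel_measurable (measure_pmf (poisson_pmf t) \<Otimes>\<^sub>M ?M)"
    by (rule meas_pmf_pair) (simp add: borel_measurable_sum mterm)
  have "(\<integral>\<^sup>+\<omega>. (\<Sum>xs\<in>Inj m (fst \<omega>). \<psi> (\<lambda>i\<in>{..<m}. snd \<omega> (xs!i))) \<partial>ppp t W)
      = (\<integral>\<^sup>+n. \<integral>\<^sup>+X. (\<Sum>xs\<in>Inj m n. \<psi> (\<lambda>i\<in>{..<m}. X (xs!i))) \<partial>?M \<partial>poisson_pmf t)"
    unfolding ppp_def using M.nn_integral_fst[OF meas] by simp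
  also have "\<dots> = (\<integral>\<^sup>+n. ennreal (real (card (Inj m n))) * ?C \<partial>poisson_pmf t)"
    by (intro nn_integral_cong) (simp add: nn_integral_sum mterm reidx ennreal_of_nat_eq_real_of_nat)
  also have "\<dots> = (\<integral>\<^sup>+n. ennreal (real (card (Inj m n))) \<partial>poisson_pmf t) * ?C"
    by (rule nn_integral_multc) simp
  also have "\<dots> = ennreal (t^m) * ?C" using poisson_card_Inj[OF tpos] by simp
  finally show ?thesis .
qed

lemma PiM_Suc:
  assumes "\<psi> \<in> borel_measurable (PiM {..<Suc n} (\<lambda>_. uniform_measure lborel W))"
  shows "(\<integral>\<^sup>+y. \<psi> y \<partial>PiM {..<Suc n} (\<lambda>_. uniform_measure lborel W))
       = (\<integral>\<^sup>+x. \<integral>\<^sup>+a. \<psi> (x(n:=a)) \<partial>uniform_measure lborel W \<partial>PiM {..<n} (\<lambda>_. uniform_measure lborel W))"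
proof -
  interpret product_sigma_finite "\<lambda>_::nat. uniform_measure lborel W" by (rule U_psf)
  show ?thesis using product_nn_integral_insert[of "{..<n}" n \<psi>] assms by (simp add: lessThan_Suc)
qed

lemma PiM_0:
  fixes \<psi> :: "(nat \<Rightarrow> 'a) \<Rightarrow> ennreal"
  shows "(\<integral>\<^sup>+y. \<psi> y \<partial>PiM {..<0} (\<lambda>_. uniform_measure lborel W)) = \<psi> (\<lambda>_. undefined)"
proof -
  interpret product_sigma_finite "\<lambda>_::nat. uniform_measure lborel W" by (rule U_psf)
  show ?thesis using nn_integral_empty[of \<psi>] by simp
qed


end

section \<open>Combinatorics of the index sets\<close>

lemma len4: "length xs = 4 \<Longrightarrow> xs = [xs!0, xs!1, xs!2, xs!3]"
  by (auto simp: numeral_eq_Suc length_Suc_conv)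

lemma len2: "length xs = 2 \<Longrightarrow> xs = [xs!0, xs!1]"
  by (auto simp: numeral_eq_Suc length_Suc_conv)

lemma cr_bar_Inj:
  "cr_bar L \<delta> (N, X) = 1/8 * (\<Sum>xs\<in>Inj 4 N. fr L \<delta> (X (xs!0)) (X (xs!1)) (X (xs!2)) (X (xs!3)))"
proof -
  have "(\<Sum>(i,j,k,l) \<in> {(i,j,k,l). i < N \<and> j < N \<and> k < N \<and> l < N \<and> distinct [i,j,k,l]}.
        of_bool (proj L ` closed_segment (X i) (X j) \<inter> proj L ` closed_segment (X k) (X l) \<noteq> {})
        * of_bool (norm (X i - X j) \<le> \<delta>) * of_bool (norm (X k - X l) \<le> \<delta>))
     = (\<Sum>xs\<in>Inj 4 N. fr L \<delta> (X (xs!0)) (X (xs!1)) (X (xs!2)) (X (xs!3)))"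
  proof (rule sum.reindex_bij_witness[where i="\<lambda>xs. (xs!0, xs!1, xs!2, xs!3)" and j="\<lambda>(i,j,k,l). [i,j,k,l]"])
    fix b assume "b \<in> Inj 4 N"
    then have "length b = 4" by (simp add: Inj_def)
    then obtain i j k l where b: "b = [i, j, k, l]" by (metis len4)
    show "(case (b!0, b!1, b!2, b!3) of (i,j,k,l) \<Rightarrow> [i,j,k,l]) = b" using b by simp
    show "(b!0, b!1, b!2, b!3) \<in> {(i,j,k,l). i < N \<and> j < N \<and> k < N \<and> l < N \<and> distinct [i,j,k,l]}"
      using \<open>b \<in> Inj 4 N\<close> unfolding Inj_def b by auto
  qed (simp_all add: Inj_def fr_def split: prod.splits, auto)
  then show ?thesis unfolding cr_bar_def by simp
qed

lemma stress_Inj: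
  "stress L w (N, X) = 1/2 * (\<Sum>xs\<in>Inj 2 N. w (X (xs!0)) (X (xs!1)) * (norm (X (xs!0) - X (xs!1)) - norm (proj L (X (xs!0)) - proj L (X (xs!1))))\<^sup>2)"
proof -
  have "(\<Sum>(i,j) \<in> {(i,j). i < N \<and> j < N \<and> i \<noteq> j}.
        w (X i) (X j) * (norm (X i - X j) - norm (proj L (X i) - proj L (X j)))\<^sup>2)
     = (\<Sum>xs\<in>Inj 2 N. w (X (xs!0)) (X (xs!1)) * (norm (X (xs!0) - X (xs!1)) - norm (proj L (X (xs!0)) - proj L (X (xs!1))))\<^sup>2)"
  proof (rule sum.reindex_bij_witness[where i="\<lambda>xs. (xs!0, xs!1)" and j="\<lambda>(i,j). [i,j]"])
    fix b assume "b \<in> Inj 2 N"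
    then have "length b = 2" by (simp add: Inj_def)
    then obtain i j where b: "b = [i, j]" by (metis len2)
    show "(case (b!0, b!1) of (i,j) \<Rightarrow> [i,j]) = b" using b by simp
    show "(b!0, b!1) \<in> {(i,j). i < N \<and> j < N \<and> i \<noteq> j}"
      using \<open>b \<in> Inj 2 N\<close> unfolding Inj_def b by auto
  qed (auto simp: Inj_def)
  then show ?thesis unfolding stress_def by simp
qed

lemma Inj_take: "zs \<in> Inj m n \<Longrightarrow> k \<le> m \<Longrightarrow> take k zs \<in> Inj k n"
  unfolding Inj_def by (auto dest: in_set_takeD)

lemma Inj_drop: "zs \<in> Inj m n \<Longrightarrow> k \<le> m \<Longrightarrow> drop k zs \<in> Inj (m - k) n"
  unfolding Inj_def by (auto dest: in_set_dropD)

lemma Inj_pair04: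
  assumes "zs \<in> Inj 5 n" shows "[zs!0, zs!4] \<in> Inj 2 n"
proof -
  have z: "length zs = 5" "distinct zs" "set zs \<subseteq> {..<n}" using assms by (auto simp: Inj_def)
  have m: "zs!0 \<in> set zs" "zs!4 \<in> set zs" using z(1) by (simp_all add: nth_mem)
  have "zs!0 < n" "zs!4 < n" using m z(3) by auto
  moreover have "zs!0 \<noteq> zs!4" using z by (simp add: nth_eq_iff_index_eq)
  ultimately show ?thesis unfolding Inj_def by auto
qed

lemma prod_sum_lower:
  fixes a b :: "nat list \<Rightarrow> real"
  assumes a: "\<And>xs. 0 \<le> a xs" and b: "\<And>xs. 0 \<le> b xs"
  shows "(\<Sum>zs\<in>Inj 6 n. a (take 4 zs) * b (drop 4 zs)) + (\<Sum>zs\<in>Inj 5 n. a (take 4 zs) * b [zs!0, zs!4])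
         \<le> (\<Sum>xs\<in>Inj 4 n. a xs) * (\<Sum>ys\<in>Inj 2 n. b ys)"
proof -
  define h1 where "h1 zs = (take 4 zs, drop 4 zs)" for zs :: "nat list"
  define h2 where "h2 zs = (take 4 zs, [zs!0, zs!4])" for zs :: "nat list"
  let ?P = "Inj 4 n \<times> Inj 2 n"
  let ?f = "\<lambda>p. a (fst p) * b (snd p)"
  have s1: "h1 ` Inj 6 n \<subseteq> ?P" unfolding h1_def using Inj_take Inj_drop[of _ 6 n 4] by force
  have s2: "h2 ` Inj 5 n \<subseteq> ?P" unfolding h2_def using Inj_take Inj_pair04 by force
  have i1: "inj_on h1 (Inj 6 n)" unfolding h1_def inj_on_def by (metis append_take_drop_id prod.inject)
  have i2: "inj_on h2 (Inj 5 n)"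
  proof (rule inj_onI)
    fix x y assume x: "x \<in> Inj 5 n" and y: "y \<in> Inj 5 n" and e: "h2 x = h2 y"
    have lx: "length x = 5" and ly: "length y = 5" using x y by (auto simp: Inj_def)
    have "x = take 4 x @ [x!4]" using lx take_Suc_conv_app_nth[of 4 x] by simp
    moreover have "y = take 4 y @ [y!4]" using ly take_Suc_conv_app_nth[of 4 y] by simp
    ultimately show "x = y" using e unfolding h2_def by (metis list.inject prod.inject)
  qed
  have disj: "h1 ` Inj 6 n \<inter> h2 ` Inj 5 n = {}"
  proof (rule ccontr)
    assume "h1 ` Inj 6 n \<inter> h2 ` Inj 5 n \<noteq> {}"
    then obtain x y where x: "x \<in> Inj 6 n" and y: "y \<in> Inj 5 n" and e: "h1 x = h2 y" by blast
    have lx: "length x = 6" and dx: "distinct x" and ly: "length y = 5" using x y by (auto simp: Inj_def)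
    have e1: "take 4 x = take 4 y" and e2: "drop 4 x = [y!0, y!4]" using e unfolding h1_def h2_def by auto
    have "y!0 \<in> set (take 4 x)" using e1 ly by (metis nth_mem nth_take length_take min_less_iff_conj zero_less_numeral)
    moreover have "y!0 \<in> set (drop 4 x)" using e2 by simp
    moreover have "set (take 4 x) \<inter> set (drop 4 x) = {}"
      using dx distinct_append[of "take 4 x" "drop 4 x"] by simp
    ultimately show False by blast
  qed
  have fin: "finite ?P" by (simp add: finite_Inj)
  have "(\<Sum>zs\<in>Inj 6 n. a (take 4 zs) * b (drop 4 zs)) + (\<Sum>zs\<in>Inj 5 n. a (take 4 zs) * b [zs!0, zs!4])
       = sum ?f (h1 ` Inj 6 n) + sum ?f (h2 ` Inj 5 n)"
    unfolding sum.reindex[OF i1] sum.reindex[OF i2] by (simp add: h1_def h2_def)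
  also have "\<dots> = sum ?f (h1 ` Inj 6 n \<union> h2 ` Inj 5 n)"
    by (rule sum.union_disjoint[symmetric]) (simp_all add: finite_Inj disj)
  also have "\<dots> \<le> sum ?f ?P"
    by (rule sum_mono2[OF fin]) (use s1 s2 a b in \<open>auto intro: mult_nonneg_nonneg\<close>)
  also have "\<dots> = (\<Sum>xs\<in>Inj 4 n. a xs) * (\<Sum>ys\<in>Inj 2 n. b ys)"
    by (simp add: sum_product sum.cartesian_product case_prod_beta)
  finally show ?thesis .
qed



definition gW :: "'a::euclidean_space set \<Rightarrow> 'a set \<Rightarrow> ('a \<Rightarrow> 'a \<Rightarrow> real) \<Rightarrow> 'a \<Rightarrow> 'a \<Rightarrow> real" where
  "gW W L w a b = w a b * (norm (a - b) - norm (proj L a - proj L b))\<^sup>2 * indicator (W \<times> W) (a, b)"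

definition stressW :: "'a::euclidean_space set \<Rightarrow> 'a set \<Rightarrow> ('a \<Rightarrow> 'a \<Rightarrow> real) \<Rightarrow> nat \<times> (nat \<Rightarrow> 'a) \<Rightarrow> real" where
  "stressW W L w \<omega> = 1/2 * (\<Sum>xs\<in>Inj 2 (fst \<omega>). gW W L w (snd \<omega> (xs!0)) (snd \<omega> (xs!1)))"

definition Jg :: "'a::euclidean_space set \<Rightarrow> 'a set \<Rightarrow> ('a \<Rightarrow> 'a \<Rightarrow> real) \<Rightarrow> 'a \<Rightarrow> ennreal" where
  "Jg W L w c = (\<integral>\<^sup>+a. ennreal (gW W L w c a) \<partial>uniform_measure lborel W)"

definition Ie :: "'a::euclidean_space set \<Rightarrow> 'a set \<Rightarrow> real \<Rightarrow> 'a \<Rightarrow> ennreal" where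
  "Ie W L \<delta> v = (\<integral>\<^sup>+b. \<integral>\<^sup>+c. \<integral>\<^sup>+d. ennreal (fr L \<delta> v b c d) \<partial>uniform_measure lborel W \<partial>uniform_measure lborel W \<partial>uniform_measure lborel W)"

context
  fixes W :: "'a::euclidean_space set" and t \<delta> :: real and L :: "'a set" and w :: "'a \<Rightarrow> 'a \<Rightarrow> real"
  assumes Wc: "compact W" and W1: "emeasure lborel W = 1" and tpos: "t > 0"
    and L: "subspace L"
    and wpos: "\<forall>x\<in>W. \<forall>y\<in>W. w x y > 0"
    and wm: "(\<lambda>p. w (fst p) (snd p)) \<in> borel_measurable (restrict_space borel (W \<times> W))"
begin

lemma Wb: "W \<in> sets borel" using Wc by (simp add: compact_imp_closed borel_closed)

lemma proj_meas[measurable]: "proj L \<in> borel_measurable borel"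
  by (rule borel_measurable_continuous_onI[OF continuous_proj[OF L]])

lemmas frm[measurable (raw)] = fr_measurable[OF L]

lemma gW_nonneg: "0 \<le> gW W L w a b"
  using wpos by (auto simp: gW_def indicator_def less_imp_le)

lemma gW_meas_pair: "(\<lambda>p. gW W L w (fst p) (snd p)) \<in> borel_measurable borel"
proof -
  have WW: "W \<times> W \<in> sets borel" using Wc by (intro borel_closed closed_Times compact_imp_closed)
  have cP: "continuous_on UNIV (proj L)" by (rule continuous_proj[OF L])
  have c1: "continuous_on UNIV (\<lambda>p::'a\<times>'a. proj L (fst p))"
    using continuous_on_compose2[OF cP continuous_on_fst[OF continuous_on_id]] by simp
  have c2: "continuous_on UNIV (\<lambda>p::'a\<times>'a. proj L (snd p))"
    using continuous_on_compose2[OF cP continuous_on_snd[OF continuous_on_id]] by simp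
  have "continuous_on UNIV (\<lambda>p::'a\<times>'a. (norm (fst p - snd p) - norm (proj L (fst p) - proj L (snd p)))\<^sup>2)"
    using c1 c2 by (intro continuous_intros)
  then have c: "(\<lambda>p::'a\<times>'a. (norm (fst p - snd p) - norm (proj L (fst p) - proj L (snd p)))\<^sup>2) \<in> borel_measurable borel"
    by (rule borel_measurable_continuous_onI)
  have "(\<lambda>p::'a\<times>'a. w (fst p) (snd p) * (norm (fst p - snd p) - norm (proj L (fst p) - proj L (snd p)))\<^sup>2)
      \<in> borel_measurable (restrict_space borel (W \<times> W))"
    using wm measurable_restrict_space1[OF c] by (rule borel_measurable_times)
  then have "(\<lambda>p::'a\<times>'a. indicator (W \<times> W) p *\<^sub>R (w (fst p) (snd p) * (norm (fst p - snd p) - norm (proj L (fst p) - proj L (snd p)))\<^sup>2))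
      \<in> borel_measurable borel"
    using WW by (subst (asm) borel_measurable_restrict_space_iff) auto
  then show ?thesis by (simp add: gW_def mult.commute)
qed

lemma gW_meas[measurable (raw)]:
  assumes "f \<in> borel_measurable M" "g \<in> borel_measurable M"
  shows "(\<lambda>x. gW W L w (f x) (g x)) \<in> borel_measurable M"
  using measurable_compose[OF borel_measurable_Pair[OF assms] gW_meas_pair] by (simp add: o_def)

lemma stressW_meas: "stressW W L w \<in> borel_measurable (ppp t W)"
  unfolding ppp_def stressW_def by (rule meas_pmf_pair) simp

lemma cr_bar_Inj': "cr_bar L \<delta> \<omega> = 1/8 * (\<Sum>xs\<in>Inj 4 (fst \<omega>). fr L \<delta> (snd \<omega> (xs!0)) (snd \<omega> (xs!1)) (snd \<omega> (xs!2)) (snd \<omega> (xs!3)))"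
  using cr_bar_Inj[of L \<delta> "fst \<omega>" "snd \<omega>"] by simp

lemma crbar_meas: "cr_bar L \<delta> \<in> borel_measurable (ppp t W)"
  unfolding ppp_def cr_bar_Inj' by (rule meas_pmf_pair) simp

lemma crbar_nonneg: "0 \<le> cr_bar L \<delta> \<omega>"
  unfolding cr_bar_Inj' by (auto intro!: sum_nonneg fr_nonneg)

lemma stressW_nonneg: "0 \<le> stressW W L w \<omega>"
  unfolding stressW_def by (auto intro!: sum_nonneg gW_nonneg)

lemma AE_inW: "AE \<omega> in ppp t W. \<forall>i. snd \<omega> i \<in> W"
proof -
  interpret P: pair_sigma_finite "measure_pmf (poisson_pmf t)" "PiM UNIV (\<lambda>_::nat. uniform_measure lborel W)"
    unfolding pair_sigma_finite_def
    using prob_space_imp_sigma_finite[OF prob_space_measure_pmf] PiM_sf[OF Wb W1 tpos] by auto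
  have inner: "AE X in PiM UNIV (\<lambda>_::nat. uniform_measure lborel W). \<forall>i. X i \<in> W"
  proof (subst AE_all_countable, intro allI)
    fix i :: nat
    show "AE X in PiM UNIV (\<lambda>_::nat. uniform_measure lborel W). X i \<in> W"
      by (rule AE_PiM_component[OF U_prob[OF Wb W1 tpos]]) (auto intro!: AE_uniform_measureI Wb)
  qed
  have "{x \<in> space (measure_pmf (poisson_pmf t) \<Otimes>\<^sub>M PiM UNIV (\<lambda>_::nat. uniform_measure lborel W)). \<forall>i. snd x i \<in> W}
     \<in> sets (measure_pmf (poisson_pmf t) \<Otimes>\<^sub>M PiM UNIV (\<lambda>_::nat. uniform_measure lborel W))"
    using Wb by measurable
  then show ?thesis unfolding ppp_def
    by (rule P.AE_pair_measure) (simp add: inner)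
qed

lemma stress_AE: "AE \<omega> in ppp t W. stress L w \<omega> = stressW W L w \<omega>"
  using AE_inW
proof (rule AE_mp, intro AE_I2 impI)
  fix \<omega> :: "nat \<times> (nat \<Rightarrow> 'a)" assume inW: "\<forall>i. snd \<omega> i \<in> W"
  show "stress L w \<omega> = stressW W L w \<omega>"
    using stress_Inj[of L w "fst \<omega>" "snd \<omega>"] inW
    by (simp add: stressW_def gW_def)
qed


lemmas Unn[measurable (raw)] = U_nn_meas[OF Wb W1 tpos]
lemmas pSI = ppp_sum_Inj[OF Wb W1 tpos]
lemmas PS = PiM_Suc[OF Wb W1 tpos]
lemmas P0 = PiM_0[OF Wb W1 tpos]

lemma Jg_meas[measurable (raw)]:
  assumes "f \<in> borel_measurable M" shows "(\<lambda>x. Jg W L w (f x)) \<in> borel_measurable M"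
  unfolding Jg_def using assms by measurable

lemma Ie_meas[measurable (raw)]:
  assumes "f \<in> borel_measurable M" shows "(\<lambda>x. Ie W L \<delta> (f x)) \<in> borel_measurable M"
  unfolding Ie_def using assms by measurable

lemma E_F: "(\<integral>\<^sup>+\<omega>. ennreal (cr_bar L \<delta> \<omega>) \<partial>ppp t W) = ennreal (1/8) * (ennreal (t^4) *
    (\<integral>\<^sup>+y. ennreal (fr L \<delta> (y 0) (y 1) (y 2) (y 3)) \<partial>PiM {..<4::nat} (\<lambda>_. uniform_measure lborel W)))"
proof -
  have m: "(\<lambda>y. ennreal (fr L \<delta> (y 0) (y 1) (y 2) (y 3))) \<in> borel_measurable (PiM {..<4::nat} (\<lambda>_. uniform_measure lborel W))"
    by measurable
  from pSI[OF m] have A: "(\<integral>\<^sup>+\<omega>. (\<Sum>xs\<in>Inj 4 (fst \<omega>). ennreal (fr L \<delta> (snd \<omega> (xs!0)) (snd \<omega> (xs!1)) (snd \<omega> (xs!2)) (snd \<omega> (xs!3)))) \<partial>ppp t W)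
     = ennreal (t^4) * (\<integral>\<^sup>+y. ennreal (fr L \<delta> (y 0) (y 1) (y 2) (y 3)) \<partial>PiM {..<4::nat} (\<lambda>_. uniform_measure lborel W))"
    by simp
  have eq: "ennreal (cr_bar L \<delta> \<omega>) = ennreal (1/8) * (\<Sum>xs\<in>Inj 4 (fst \<omega>). ennreal (fr L \<delta> (snd \<omega> (xs!0)) (snd \<omega> (xs!1)) (snd \<omega> (xs!2)) (snd \<omega> (xs!3))))" for \<omega>
    unfolding cr_bar_Inj' by (subst ennreal_mult) (auto simp: sum_nonneg fr_nonneg)
  have mm: "(\<lambda>\<omega>. \<Sum>xs\<in>Inj 4 (fst \<omega>). ennreal (fr L \<delta> (snd \<omega> (xs!0)) (snd \<omega> (xs!1)) (snd \<omega> (xs!2)) (snd \<omega> (xs!3)))) \<in> borel_measurable (ppp t W)"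
    unfolding ppp_def by (rule meas_pmf_pair) simp
  show ?thesis unfolding eq nn_integral_cmult[OF mm] A ..
qed

lemma E_G: "(\<integral>\<^sup>+\<omega>. ennreal (stressW W L w \<omega>) \<partial>ppp t W) = ennreal (1/2) * (ennreal (t^2) *
    (\<integral>\<^sup>+y. ennreal (gW W L w (y 0) (y 1)) \<partial>PiM {..<2::nat} (\<lambda>_. uniform_measure lborel W)))"
proof -
  have m: "(\<lambda>y. ennreal (gW W L w (y 0) (y 1))) \<in> borel_measurable (PiM {..<2::nat} (\<lambda>_. uniform_measure lborel W))"
    by measurable
  from pSI[OF m] have A: "(\<integral>\<^sup>+\<omega>. (\<Sum>xs\<in>Inj 2 (fst \<omega>). ennreal (gW W L w (snd \<omega> (xs!0)) (snd \<omega> (xs!1)))) \<partial>ppp t W)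
     = ennreal (t^2) * (\<integral>\<^sup>+y. ennreal (gW W L w (y 0) (y 1)) \<partial>PiM {..<2::nat} (\<lambda>_. uniform_measure lborel W))"
    by simp
  have eq: "ennreal (stressW W L w \<omega>) = ennreal (1/2) * (\<Sum>xs\<in>Inj 2 (fst \<omega>). ennreal (gW W L w (snd \<omega> (xs!0)) (snd \<omega> (xs!1))))" for \<omega>
    unfolding stressW_def by (subst ennreal_mult) (auto simp: sum_nonneg gW_nonneg)
  have mm: "(\<lambda>\<omega>. \<Sum>xs\<in>Inj 2 (fst \<omega>). ennreal (gW W L w (snd \<omega> (xs!0)) (snd \<omega> (xs!1)))) \<in> borel_measurable (ppp t W)"
    unfolding ppp_def by (rule meas_pmf_pair) simp
  show ?thesis unfolding eq nn_integral_cmult[OF mm] A ..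
qed

lemma FG_pointwise:
  fixes N :: nat and X :: "nat \<Rightarrow> 'a"
  shows "ennreal (1/16) * ((\<Sum>zs\<in>Inj 6 N. ennreal (fr L \<delta> (X (zs!0)) (X (zs!1)) (X (zs!2)) (X (zs!3)) * gW W L w (X (zs!4)) (X (zs!5))))
        + (\<Sum>zs\<in>Inj 5 N. ennreal (fr L \<delta> (X (zs!0)) (X (zs!1)) (X (zs!2)) (X (zs!3)) * gW W L w (X (zs!0)) (X (zs!4)))))
     \<le> ennreal (cr_bar L \<delta> (N, X) * stressW W L w (N, X))"
proof -
  define a where "a xs = fr L \<delta> (X (xs!0)) (X (xs!1)) (X (xs!2)) (X (xs!3))" for xs
  define b where "b ys = gW W L w (X (ys!0)) (X (ys!1))" for ys
  have a0: "0 \<le> a xs" for xs unfolding a_def by (rule fr_nonneg)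
  have b0: "0 \<le> b xs" for xs unfolding b_def by (rule gW_nonneg)
  have low: "(\<Sum>zs\<in>Inj 6 N. a (take 4 zs) * b (drop 4 zs)) + (\<Sum>zs\<in>Inj 5 N. a (take 4 zs) * b [zs!0, zs!4])
         \<le> (\<Sum>xs\<in>Inj 4 N. a xs) * (\<Sum>ys\<in>Inj 2 N. b ys)"
    by (rule prod_sum_lower[OF a0 b0])
  have e6: "(\<Sum>zs\<in>Inj 6 N. a (take 4 zs) * b (drop 4 zs)) =
     (\<Sum>zs\<in>Inj 6 N. fr L \<delta> (X (zs!0)) (X (zs!1)) (X (zs!2)) (X (zs!3)) * gW W L w (X (zs!4)) (X (zs!5)))"
  proof (rule sum.cong[OF refl])
    fix zs assume "zs \<in> Inj 6 N"
    then have l: "length zs = 6" by (simp add: Inj_def)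
    show "a (take 4 zs) * b (drop 4 zs) = fr L \<delta> (X (zs!0)) (X (zs!1)) (X (zs!2)) (X (zs!3)) * gW W L w (X (zs!4)) (X (zs!5))"
      unfolding a_def b_def using l by (simp add: nth_drop)
  qed
  have e5: "(\<Sum>zs\<in>Inj 5 N. a (take 4 zs) * b [zs!0, zs!4]) =
     (\<Sum>zs\<in>Inj 5 N. fr L \<delta> (X (zs!0)) (X (zs!1)) (X (zs!2)) (X (zs!3)) * gW W L w (X (zs!0)) (X (zs!4)))"
    unfolding a_def b_def by simp
  have prod: "cr_bar L \<delta> (N, X) * stressW W L w (N, X) = 1/16 * ((\<Sum>xs\<in>Inj 4 N. a xs) * (\<Sum>ys\<in>Inj 2 N. b ys))"
    unfolding cr_bar_Inj stressW_def a_def b_def by simp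
  have nn6: "0 \<le> fr L \<delta> (X (zs!0)) (X (zs!1)) (X (zs!2)) (X (zs!3)) * gW W L w (X (zs!4)) (X (zs!5))" for zs
    by (intro mult_nonneg_nonneg fr_nonneg gW_nonneg)
  have nn5: "0 \<le> fr L \<delta> (X (zs!0)) (X (zs!1)) (X (zs!2)) (X (zs!3)) * gW W L w (X (zs!0)) (X (zs!4))" for zs
    by (intro mult_nonneg_nonneg fr_nonneg gW_nonneg)
  define S6 where "S6 = (\<Sum>zs\<in>Inj 6 N. a (take 4 zs) * b (drop 4 zs))"
  define S5 where "S5 = (\<Sum>zs\<in>Inj 5 N. a (take 4 zs) * b [zs!0, zs!4])"
  have s6: "(\<Sum>zs\<in>Inj 6 N. ennreal (fr L \<delta> (X (zs!0)) (X (zs!1)) (X (zs!2)) (X (zs!3)) * gW W L w (X (zs!4)) (X (zs!5)))) = ennreal S6"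
    unfolding S6_def e6 by (rule sum_ennreal) (rule nn6)
  have s5: "(\<Sum>zs\<in>Inj 5 N. ennreal (fr L \<delta> (X (zs!0)) (X (zs!1)) (X (zs!2)) (X (zs!3)) * gW W L w (X (zs!0)) (X (zs!4)))) = ennreal S5"
    unfolding S5_def e5 by (rule sum_ennreal) (rule nn5)
  have S60: "0 \<le> S6" unfolding S6_def e6 by (intro sum_nonneg nn6)
  have S50: "0 \<le> S5" unfolding S5_def e5 by (intro sum_nonneg nn5)
  have "ennreal (1/16) * ((\<Sum>zs\<in>Inj 6 N. ennreal (fr L \<delta> (X (zs!0)) (X (zs!1)) (X (zs!2)) (X (zs!3)) * gW W L w (X (zs!4)) (X (zs!5))))
        + (\<Sum>zs\<in>Inj 5 N. ennreal (fr L \<delta> (X (zs!0)) (X (zs!1)) (X (zs!2)) (X (zs!3)) * gW W L w (X (zs!0)) (X (zs!4)))))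
      = ennreal (1/16) * ennreal (S6 + S5)"
    unfolding s6 s5 using S60 S50 by (simp add: ennreal_plus)
  also have "\<dots> = ennreal (1/16 * ((\<Sum>zs\<in>Inj 6 N. a (take 4 zs) * b (drop 4 zs)) + (\<Sum>zs\<in>Inj 5 N. a (take 4 zs) * b [zs!0, zs!4])))"
    unfolding S6_def[symmetric] S5_def[symmetric] by (rule ennreal_mult[symmetric]) (use S60 S50 in simp_all)
  also have "\<dots> \<le> ennreal (cr_bar L \<delta> (N, X) * stressW W L w (N, X))"
    unfolding prod by (rule ennreal_leI) (use low in simp)
  finally show ?thesis .
qed

lemma E_FG: "ennreal (1/16) * (ennreal (t^6) *
      (\<integral>\<^sup>+y. ennreal (fr L \<delta> (y 0) (y 1) (y 2) (y 3) * gW W L w (y 4) (y 5)) \<partial>PiM {..<6::nat} (\<lambda>_. uniform_measure lborel W))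
    + ennreal (t^5) *
      (\<integral>\<^sup>+y. ennreal (fr L \<delta> (y 0) (y 1) (y 2) (y 3) * gW W L w (y 0) (y 4)) \<partial>PiM {..<5::nat} (\<lambda>_. uniform_measure lborel W)))
   \<le> (\<integral>\<^sup>+\<omega>. ennreal (cr_bar L \<delta> \<omega> * stressW W L w \<omega>) \<partial>ppp t W)"
proof -
  have m6: "(\<lambda>y. ennreal (fr L \<delta> (y 0) (y 1) (y 2) (y 3) * gW W L w (y 4) (y 5))) \<in> borel_measurable (PiM {..<6::nat} (\<lambda>_. uniform_measure lborel W))"
    by measurable
  have m5: "(\<lambda>y. ennreal (fr L \<delta> (y 0) (y 1) (y 2) (y 3) * gW W L w (y 0) (y 4))) \<in> borel_measurable (PiM {..<5::nat} (\<lambda>_. uniform_measure lborel W))"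
    by measurable
  from pSI[OF m6] have A6: "(\<integral>\<^sup>+\<omega>. (\<Sum>zs\<in>Inj 6 (fst \<omega>). ennreal (fr L \<delta> (snd \<omega> (zs!0)) (snd \<omega> (zs!1)) (snd \<omega> (zs!2)) (snd \<omega> (zs!3)) * gW W L w (snd \<omega> (zs!4)) (snd \<omega> (zs!5)))) \<partial>ppp t W)
     = ennreal (t^6) * (\<integral>\<^sup>+y. ennreal (fr L \<delta> (y 0) (y 1) (y 2) (y 3) * gW W L w (y 4) (y 5)) \<partial>PiM {..<6::nat} (\<lambda>_. uniform_measure lborel W))"
    by simp
  from pSI[OF m5] have A5: "(\<integral>\<^sup>+\<omega>. (\<Sum>zs\<in>Inj 5 (fst \<omega>). ennreal (fr L \<delta> (snd \<omega> (zs!0)) (snd \<omega> (zs!1)) (snd \<omega> (zs!2)) (snd \<omega> (zs!3)) * gW W L w (snd \<omega> (zs!0)) (snd \<omega> (zs!4)))) \<partial>ppp t W)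
     = ennreal (t^5) * (\<integral>\<^sup>+y. ennreal (fr L \<delta> (y 0) (y 1) (y 2) (y 3) * gW W L w (y 0) (y 4)) \<partial>PiM {..<5::nat} (\<lambda>_. uniform_measure lborel W))"
    by simp
  have mm6: "(\<lambda>\<omega>. \<Sum>zs\<in>Inj 6 (fst \<omega>). ennreal (fr L \<delta> (snd \<omega> (zs!0)) (snd \<omega> (zs!1)) (snd \<omega> (zs!2)) (snd \<omega> (zs!3)) * gW W L w (snd \<omega> (zs!4)) (snd \<omega> (zs!5)))) \<in> borel_measurable (ppp t W)"
    unfolding ppp_def by (rule meas_pmf_pair) simp
  have mm5: "(\<lambda>\<omega>. \<Sum>zs\<in>Inj 5 (fst \<omega>). ennreal (fr L \<delta> (snd \<omega> (zs!0)) (snd \<omega> (zs!1)) (snd \<omega> (zs!2)) (snd \<omega> (zs!3)) * gW W L w (snd \<omega> (zs!0)) (snd \<omega> (zs!4)))) \<in> borel_measurable (ppp t W)"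
    unfolding ppp_def by (rule meas_pmf_pair) simp
  have "ennreal (1/16) * (ennreal (t^6) *
      (\<integral>\<^sup>+y. ennreal (fr L \<delta> (y 0) (y 1) (y 2) (y 3) * gW W L w (y 4) (y 5)) \<partial>PiM {..<6::nat} (\<lambda>_. uniform_measure lborel W))
    + ennreal (t^5) *
      (\<integral>\<^sup>+y. ennreal (fr L \<delta> (y 0) (y 1) (y 2) (y 3) * gW W L w (y 0) (y 4)) \<partial>PiM {..<5::nat} (\<lambda>_. uniform_measure lborel W)))
    = (\<integral>\<^sup>+\<omega>. ennreal (1/16) * ((\<Sum>zs\<in>Inj 6 (fst \<omega>). ennreal (fr L \<delta> (snd \<omega> (zs!0)) (snd \<omega> (zs!1)) (snd \<omega> (zs!2)) (snd \<omega> (zs!3)) * gW W L w (snd \<omega> (zs!4)) (snd \<omega> (zs!5))))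
        + (\<Sum>zs\<in>Inj 5 (fst \<omega>). ennreal (fr L \<delta> (snd \<omega> (zs!0)) (snd \<omega> (zs!1)) (snd \<omega> (zs!2)) (snd \<omega> (zs!3)) * gW W L w (snd \<omega> (zs!0)) (snd \<omega> (zs!4))))) \<partial>ppp t W)"
    unfolding A6[symmetric] A5[symmetric]
    by (subst nn_integral_add[OF mm6 mm5, symmetric], rule nn_integral_cmult[symmetric]) (use mm6 mm5 in measurable)
  also have "\<dots> \<le> (\<integral>\<^sup>+\<omega>. ennreal (cr_bar L \<delta> \<omega> * stressW W L w \<omega>) \<partial>ppp t W)"
  proof (rule nn_integral_mono)
    fix \<omega> :: "nat \<times> (nat \<Rightarrow> 'a)"
    show "ennreal (1/16) * ((\<Sum>zs\<in>Inj 6 (fst \<omega>). ennreal (fr L \<delta> (snd \<omega> (zs!0)) (snd \<omega> (zs!1)) (snd \<omega> (zs!2)) (snd \<omega> (zs!3)) * gW W L w (snd \<omega> (zs!4)) (snd \<omega> (zs!5))))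
        + (\<Sum>zs\<in>Inj 5 (fst \<omega>). ennreal (fr L \<delta> (snd \<omega> (zs!0)) (snd \<omega> (zs!1)) (snd \<omega> (zs!2)) (snd \<omega> (zs!3)) * gW W L w (snd \<omega> (zs!0)) (snd \<omega> (zs!4)))))
      \<le> ennreal (cr_bar L \<delta> \<omega> * stressW W L w \<omega>)"
      using FG_pointwise[where N="fst \<omega>" and X="snd \<omega>"] by simp
  qed
  finally show ?thesis .
qed

lemma C6_eq: "(\<integral>\<^sup>+y. ennreal (fr L \<delta> (y 0) (y 1) (y 2) (y 3) * gW W L w (y 4) (y 5)) \<partial>PiM {..<6::nat} (\<lambda>_. uniform_measure lborel W))
  = (\<integral>\<^sup>+y. ennreal (fr L \<delta> (y 0) (y 1) (y 2) (y 3)) \<partial>PiM {..<4::nat} (\<lambda>_. uniform_measure lborel W))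
    * (\<integral>\<^sup>+c. Jg W L w c \<partial>uniform_measure lborel W)"
proof -
  let ?U = "uniform_measure lborel W"
  have m6: "(\<lambda>y. ennreal (fr L \<delta> (y 0) (y 1) (y 2) (y 3) * gW W L w (y 4) (y 5))) \<in> borel_measurable (PiM {..<Suc 5::nat} (\<lambda>_. ?U))"
    by measurable
  have m5: "(\<lambda>y. ennreal (fr L \<delta> (y 0) (y 1) (y 2) (y 3)) * Jg W L w (y 4)) \<in> borel_measurable (PiM {..<Suc 4::nat} (\<lambda>_. ?U))"
    by measurable
  have s1: "(\<integral>\<^sup>+y. ennreal (fr L \<delta> (y 0) (y 1) (y 2) (y 3) * gW W L w (y 4) (y 5)) \<partial>PiM {..<6::nat} (\<lambda>_. ?U))
     = (\<integral>\<^sup>+x. \<integral>\<^sup>+a. ennreal (fr L \<delta> (x 0) (x 1) (x 2) (x 3) * gW W L w (x 4) a) \<partial>?U \<partial>PiM {..<5::nat} (\<lambda>_. ?U))"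
    using PS[OF m6] by simp
  also have "\<dots> = (\<integral>\<^sup>+x. ennreal (fr L \<delta> (x 0) (x 1) (x 2) (x 3)) * Jg W L w (x 4) \<partial>PiM {..<5::nat} (\<lambda>_. ?U))"
    unfolding Jg_def
    by (intro nn_integral_cong) (simp add: ennreal_mult fr_nonneg gW_nonneg nn_integral_cmult)
  also have "\<dots> = (\<integral>\<^sup>+x. \<integral>\<^sup>+a. ennreal (fr L \<delta> (x 0) (x 1) (x 2) (x 3)) * Jg W L w a \<partial>?U \<partial>PiM {..<4::nat} (\<lambda>_. ?U))"
    using PS[OF m5] by simp
  also have "\<dots> = (\<integral>\<^sup>+x. ennreal (fr L \<delta> (x 0) (x 1) (x 2) (x 3)) * (\<integral>\<^sup>+c. Jg W L w c \<partial>?U) \<partial>PiM {..<4::nat} (\<lambda>_. ?U))"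
    by (intro nn_integral_cong) (simp add: nn_integral_cmult)
  also have "\<dots> = (\<integral>\<^sup>+y. ennreal (fr L \<delta> (y 0) (y 1) (y 2) (y 3)) \<partial>PiM {..<4::nat} (\<lambda>_. ?U)) * (\<integral>\<^sup>+c. Jg W L w c \<partial>?U)"
    by (rule nn_integral_multc) measurable
  finally show ?thesis .
qed

lemma C2_eq: "(\<integral>\<^sup>+y. ennreal (gW W L w (y 0) (y 1)) \<partial>PiM {..<2::nat} (\<lambda>_. uniform_measure lborel W))
  = (\<integral>\<^sup>+c. Jg W L w c \<partial>uniform_measure lborel W)"
proof -
  let ?U = "uniform_measure lborel W"
  have m2: "(\<lambda>y. ennreal (gW W L w (y 0) (y 1))) \<in> borel_measurable (PiM {..<Suc 1::nat} (\<lambda>_. ?U))"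
    by measurable
  have m1: "(\<lambda>y. Jg W L w (y 0)) \<in> borel_measurable (PiM {..<Suc 0::nat} (\<lambda>_. ?U))"
    by measurable
  have "(\<integral>\<^sup>+y. ennreal (gW W L w (y 0) (y 1)) \<partial>PiM {..<2::nat} (\<lambda>_. ?U))
      = (\<integral>\<^sup>+x. Jg W L w (x 0) \<partial>PiM {..<1::nat} (\<lambda>_. ?U))"
    using PS[OF m2] by (simp add: Jg_def numeral_2_eq_2)
  also have "\<dots> = (\<integral>\<^sup>+x. \<integral>\<^sup>+a. Jg W L w ((x(0:=a)) 0) \<partial>?U \<partial>PiM {..<0::nat} (\<lambda>_. ?U))"
    using PS[OF m1] by simp
  also have "\<dots> = (\<integral>\<^sup>+c. Jg W L w c \<partial>?U)"
    by (subst P0) simp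
  finally show ?thesis .
qed

lemma C5_eq: "(\<integral>\<^sup>+y. ennreal (fr L \<delta> (y 0) (y 1) (y 2) (y 3) * gW W L w (y 0) (y 4)) \<partial>PiM {..<5::nat} (\<lambda>_. uniform_measure lborel W))
  = (\<integral>\<^sup>+v. Ie W L \<delta> v * Jg W L w v \<partial>uniform_measure lborel W)"
proof -
  let ?U = "uniform_measure lborel W"
  have m5: "(\<lambda>y. ennreal (fr L \<delta> (y 0) (y 1) (y 2) (y 3) * gW W L w (y 0) (y 4))) \<in> borel_measurable (PiM {..<Suc 4::nat} (\<lambda>_. ?U))"
    by measurable
  have m4: "(\<lambda>y. ennreal (fr L \<delta> (y 0) (y 1) (y 2) (y 3)) * Jg W L w (y 0)) \<in> borel_measurable (PiM {..<Suc 3::nat} (\<lambda>_. ?U))"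
    by measurable
  have m3: "(\<lambda>y. (\<integral>\<^sup>+d. ennreal (fr L \<delta> (y 0) (y 1) (y 2) d) \<partial>?U) * Jg W L w (y 0)) \<in> borel_measurable (PiM {..<Suc 2::nat} (\<lambda>_. ?U))"
    by measurable
  have m2: "(\<lambda>y. (\<integral>\<^sup>+c. \<integral>\<^sup>+d. ennreal (fr L \<delta> (y 0) (y 1) c d) \<partial>?U \<partial>?U) * Jg W L w (y 0)) \<in> borel_measurable (PiM {..<Suc 1::nat} (\<lambda>_. ?U))"
    by measurable
  have m1: "(\<lambda>y. Ie W L \<delta> (y 0) * Jg W L w (y 0)) \<in> borel_measurable (PiM {..<Suc 0::nat} (\<lambda>_. ?U))"
    by measurable
  have "(\<integral>\<^sup>+y. ennreal (fr L \<delta> (y 0) (y 1) (y 2) (y 3) * gW W L w (y 0) (y 4)) \<partial>PiM {..<5::nat} (\<lambda>_. ?U))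
      = (\<integral>\<^sup>+x. \<integral>\<^sup>+a. ennreal (fr L \<delta> (x 0) (x 1) (x 2) (x 3) * gW W L w (x 0) a) \<partial>?U \<partial>PiM {..<4::nat} (\<lambda>_. ?U))"
    using PS[OF m5] by simp
  also have "\<dots> = (\<integral>\<^sup>+x. ennreal (fr L \<delta> (x 0) (x 1) (x 2) (x 3)) * Jg W L w (x 0) \<partial>PiM {..<4::nat} (\<lambda>_. ?U))"
    unfolding Jg_def
    by (intro nn_integral_cong) (simp add: ennreal_mult fr_nonneg gW_nonneg nn_integral_cmult)
  also have "\<dots> = (\<integral>\<^sup>+x. \<integral>\<^sup>+a. ennreal (fr L \<delta> (x 0) (x 1) (x 2) a) * Jg W L w (x 0) \<partial>?U \<partial>PiM {..<3::nat} (\<lambda>_. ?U))"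
    using PS[OF m4] by simp
  also have "\<dots> = (\<integral>\<^sup>+x. (\<integral>\<^sup>+d. ennreal (fr L \<delta> (x 0) (x 1) (x 2) d) \<partial>?U) * Jg W L w (x 0) \<partial>PiM {..<3::nat} (\<lambda>_. ?U))"
    by (intro nn_integral_cong nn_integral_multc) measurable
  also have "\<dots> = (\<integral>\<^sup>+x. \<integral>\<^sup>+a. (\<integral>\<^sup>+d. ennreal (fr L \<delta> (x 0) (x 1) a d) \<partial>?U) * Jg W L w (x 0) \<partial>?U \<partial>PiM {..<2::nat} (\<lambda>_. ?U))"
    using PS[OF m3] by simp
  also have "\<dots> = (\<integral>\<^sup>+x. (\<integral>\<^sup>+c. \<integral>\<^sup>+d. ennreal (fr L \<delta> (x 0) (x 1) c d) \<partial>?U \<partial>?U) * Jg W L w (x 0) \<partial>PiM {..<2::nat} (\<lambda>_. ?U))"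
    by (intro nn_integral_cong nn_integral_multc) measurable
  also have "\<dots> = (\<integral>\<^sup>+x. \<integral>\<^sup>+a. (\<integral>\<^sup>+c. \<integral>\<^sup>+d. ennreal (fr L \<delta> (x 0) a c d) \<partial>?U \<partial>?U) * Jg W L w (x 0) \<partial>?U \<partial>PiM {..<1::nat} (\<lambda>_. ?U))"
    using PS[OF m2] by (simp add: numeral_2_eq_2)
  also have "\<dots> = (\<integral>\<^sup>+x. Ie W L \<delta> (x 0) * Jg W L w (x 0) \<partial>PiM {..<1::nat} (\<lambda>_. ?U))"
    unfolding Ie_def by (intro nn_integral_cong nn_integral_multc) measurable
  also have "\<dots> = (\<integral>\<^sup>+x. \<integral>\<^sup>+a. Ie W L \<delta> ((x(0:=a)) 0) * Jg W L w ((x(0:=a)) 0) \<partial>?U \<partial>PiM {..<0::nat} (\<lambda>_. ?U))"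
    using PS[OF m1] by simp
  also have "\<dots> = (\<integral>\<^sup>+v. Ie W L \<delta> v * Jg W L w v \<partial>?U)"
    by (subst P0) simp
  finally show ?thesis .
qed

end



lemma pow8_exp: "(real n) ^ 8 \<le> fact 8 * exp (real n)"
proof -
  have "(\<lambda>k. real n ^ k /\<^sub>R fact k) sums exp (real n)" by (rule exp_converges)
  then have s: "(\<lambda>k. real n ^ k / fact k) sums exp (real n)" by (simp add: divide_inverse_commute)
  have "sum (\<lambda>k. real n ^ k / fact k) {8} \<le> suminf (\<lambda>k. real n ^ k / fact k)"
    by (rule sum_le_suminf) (use s in \<open>auto simp: sums_iff\<close>)
  then have "real n ^ 8 / fact 8 \<le> exp (real n)" using s by (simp add: sums_iff)
  then show ?thesis by (simp add: pos_divide_le_eq mult.commute)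
qed

lemma pois_exp_fin:
  assumes t: "t > 0"
  shows "(\<integral>\<^sup>+n. ennreal (exp (real n)) \<partial>measure_pmf (poisson_pmf t)) < \<top>"
proof -
  define a where "a n = pmf (poisson_pmf t) n * exp (real n)" for n
  have ae: "a n = exp (-t) * ((t * exp 1) ^ n / fact n)" for n
  proof -
    have "exp (real n) = exp 1 ^ n" using exp_of_nat_mult[of n 1] by simp
    then show ?thesis using t by (simp add: a_def power_mult_distrib)
  qed
  have "(\<lambda>k. (t * exp 1) ^ k /\<^sub>R fact k) sums exp (t * exp 1)" by (rule exp_converges)
  then have "(\<lambda>k. (t * exp 1) ^ k / fact k) sums exp (t * exp 1)" by (simp add: divide_inverse_commute)
  then have "(\<lambda>k. exp (-t) * ((t * exp 1) ^ k / fact k)) sums (exp (-t) * exp (t * exp 1))"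
    by (rule sums_mult)
  moreover have aeq: "a = (\<lambda>k. exp (-t) * ((t * exp 1) ^ k / fact k))" by (rule ext) (rule ae)
  ultimately have as: "a sums (exp (-t) * exp (t * exp 1))" by (simp only: aeq)
  have "(\<integral>\<^sup>+n. ennreal (exp (real n)) \<partial>measure_pmf (poisson_pmf t)) = (\<integral>\<^sup>+n. ennreal (a n) \<partial>count_space UNIV)"
    unfolding nn_integral_measure_pmf a_def by (simp add: ennreal_mult)
  also have "\<dots> = (\<Sum>n. ennreal (a n))" by (rule nn_integral_count_space_nat)
  also have "\<dots> = ennreal (exp (-t) * exp (t * exp 1))"
  proof -
    have "0 \<le> a n" for n by (simp add: a_def)
    then show ?thesis using as t by (intro sums_unique[symmetric]) simp
  qed
  finally show ?thesis by simp
qed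

lemma card_Inj_le: "card (Inj m n) \<le> n ^ m"
proof -
  have "card (Inj m n) \<le> card {xs. set xs \<subseteq> {..<n} \<and> length xs = m}"
    by (rule card_mono) (auto simp: Inj_def intro: finite_lists_length_eq)
  also have "\<dots> = n ^ m" by (simp add: card_lists_length_eq)
  finally show ?thesis .
qed

lemma ennreal_div1: "(x::ennreal) / 1 = x" by (simp add: divide_ennreal_def)

lemma cov_expand:
  assumes "prob_space M" and iX: "integrable M X" and iY: "integrable M Y"
    and iXY: "integrable M (\<lambda>\<omega>. X \<omega> * Y \<omega>)"
  shows "cov M X Y = (\<integral>\<omega>. X \<omega> * Y \<omega> \<partial>M) - (\<integral>\<omega>. X \<omega> \<partial>M) * (\<integral>\<omega>. Y \<omega> \<partial>M)"
proof -
  interpret prob_space M by fact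
  define a where "a = (\<integral>\<omega>. X \<omega> \<partial>M)"
  define b where "b = (\<integral>\<omega>. Y \<omega> \<partial>M)"
  have eq: "(\<lambda>\<omega>. (X \<omega> - a) * (Y \<omega> - b)) = (\<lambda>\<omega>. ((X \<omega> * Y \<omega> - b * X \<omega>) - a * Y \<omega>) + a * b)"
    by (auto simp: algebra_simps)
  have i1: "integrable M (\<lambda>\<omega>. X \<omega> * Y \<omega> - b * X \<omega>)" using iXY iX by auto
  have i2: "integrable M (\<lambda>\<omega>. (X \<omega> * Y \<omega> - b * X \<omega>) - a * Y \<omega>)" using i1 iY by auto
  have "cov M X Y = (\<integral>\<omega>. ((X \<omega> * Y \<omega> - b * X \<omega>) - a * Y \<omega>) + a * b \<partial>M)"
    unfolding cov_def a_def[symmetric] b_def[symmetric] eq ..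
  also have "\<dots> = (\<integral>\<omega>. (X \<omega> * Y \<omega> - b * X \<omega>) - a * Y \<omega> \<partial>M) + (\<integral>\<omega>. a * b \<partial>M)"
    by (rule Bochner_Integration.integral_add[OF i2 integrable_const])
  also have "(\<integral>\<omega>. a * b \<partial>M) = a * b" by (simp add: prob_space)
  also have "(\<integral>\<omega>. (X \<omega> * Y \<omega> - b * X \<omega>) - a * Y \<omega> \<partial>M) = (\<integral>\<omega>. X \<omega> * Y \<omega> - b * X \<omega> \<partial>M) - (\<integral>\<omega>. a * Y \<omega> \<partial>M)"
    by (rule Bochner_Integration.integral_diff[OF i1]) (use iY in auto)
  also have "(\<integral>\<omega>. a * Y \<omega> \<partial>M) = a * b" by (simp add: b_def)
  also have "(\<integral>\<omega>. X \<omega> * Y \<omega> - b * X \<omega> \<partial>M) = (\<integral>\<omega>. X \<omega> * Y \<omega> \<partial>M) - (\<integral>\<omega>. b * X \<omega> \<partial>M)"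
    by (rule Bochner_Integration.integral_diff[OF iXY]) (use iX in auto)
  also have "(\<integral>\<omega>. b * X \<omega> \<partial>M) = b * a" by (simp add: a_def)
  finally show ?thesis by (simp add: a_def b_def algebra_simps)
qed

context
  fixes W :: "'a::euclidean_space set" and t \<delta> :: real and L :: "'a set" and w :: "'a \<Rightarrow> 'a \<Rightarrow> real"
  assumes Wc: "compact W" and W1: "emeasure lborel W = 1" and tpos: "t > 0"
    and L: "subspace L"
    and wpos: "\<forall>x\<in>W. \<forall>y\<in>W. w x y > 0"
    and wm: "(\<lambda>p. w (fst p) (snd p)) \<in> borel_measurable (restrict_space borel (W \<times> W))"
begin

lemmas A = Wc W1 tpos L wpos wm
lemmas Wb' = Wb[OF A]
lemmas Unn'[measurable (raw)] = Unn[OF A]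
lemmas frm'[measurable (raw)] = frm[OF A]
lemmas gW_meas'[measurable (raw)] = gW_meas[OF A]
lemmas Jg_meas'[measurable (raw)] = Jg_meas[OF A]
lemmas Ie_meas'[measurable (raw)] = Ie_meas[OF A]
lemmas gW_nonneg' = gW_nonneg[OF A]

lemma Wb_sets[measurable]: "W \<in> sets borel" by (rule Wb')

lemma nnU_le1:
  assumes "\<And>x. f x \<le> 1" shows "(\<integral>\<^sup>+x. f x \<partial>uniform_measure lborel W) \<le> 1"
proof -
  interpret prob_space "uniform_measure lborel W" by (rule U_prob[OF Wb' W1 tpos])
  have "(\<integral>\<^sup>+x. f x \<partial>uniform_measure lborel W) \<le> (\<integral>\<^sup>+x. 1 \<partial>uniform_measure lborel W)"
    by (rule nn_integral_mono) (use assms in auto)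
  also have "\<dots> = emeasure (uniform_measure lborel W) (space (uniform_measure lborel W))"
    by (subst nn_integral_const) (rule mult_1)
  also have "\<dots> = 1" by (rule emeasure_space_1)
  finally show ?thesis .
qed

lemma set_int_U:
  fixes \<phi> :: "'a \<Rightarrow> real"
  assumes m: "\<phi> \<in> borel_measurable borel" and nn: "\<And>x. 0 \<le> \<phi> x"
  shows "(LINT x:W|lborel. \<phi> x) = enn2real (\<integral>\<^sup>+x. ennreal (\<phi> x) \<partial>uniform_measure lborel W)"
proof -
  have m'[measurable]: "\<phi> \<in> borel_measurable lborel" using m by simp
  have "(LINT x:W|lborel. \<phi> x) = (\<integral>x. indicator W x * \<phi> x \<partial>lborel)"
    by (simp add: set_lebesgue_integral_def)
  also have "\<dots> = enn2real (\<integral>\<^sup>+x. ennreal (indicator W x * \<phi> x) \<partial>lborel)"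
    by (rule integral_eq_nn_integral) (use nn in \<open>auto simp: indicator_def\<close>)
  also have "(\<integral>\<^sup>+x. ennreal (indicator W x * \<phi> x) \<partial>lborel) = (\<integral>\<^sup>+x. ennreal (\<phi> x) * indicator W x \<partial>lborel)"
    by (intro nn_integral_cong) (auto simp: indicator_def)
  also have "\<dots> = (\<integral>\<^sup>+x. ennreal (\<phi> x) \<partial>uniform_measure lborel W)"
    by (subst nn_integral_uniform_measure) (simp_all add: W1 ennreal_div1)
  finally show ?thesis .
qed

lemma I_W_eq: "I_W W L \<delta> v = enn2real (Ie W L \<delta> v)"
proof -
  let ?U = "uniform_measure lborel W"
  define F3 where "F3 b c = (\<integral>\<^sup>+d. ennreal (fr L \<delta> v b c d) \<partial>?U)" for b c
  define F2 where "F2 b = (\<integral>\<^sup>+c. F3 b c \<partial>?U)" for b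
  have F3le: "F3 b c \<le> 1" for b c unfolding F3_def by (rule nnU_le1) (simp add: fr_le1)
  have F2le: "F2 b \<le> 1" for b unfolding F2_def by (rule nnU_le1) (rule F3le)
  have F3fin: "F3 b c \<noteq> \<top>" for b c using F3le[of b c] by (auto simp: top_unique)
  have F2fin: "F2 b \<noteq> \<top>" for b using F2le[of b] by (auto simp: top_unique)
  have e1: "(LINT d:W|lborel. fr L \<delta> v b c d) = enn2real (F3 b c)" for b c
    unfolding F3_def by (rule set_int_U) (measurable, rule fr_nonneg)
  have e2: "(LINT c:W|lborel. enn2real (F3 b c)) = enn2real (F2 b)" for b
  proof -
    have "(LINT c:W|lborel. enn2real (F3 b c)) = enn2real (\<integral>\<^sup>+c. ennreal (enn2real (F3 b c)) \<partial>?U)"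
      by (rule set_int_U) (simp_all add: F3_def)
    then show ?thesis using F3fin by (simp add: F2_def ennreal_enn2real_if)
  qed
  have e3: "(LINT b:W|lborel. enn2real (F2 b)) = enn2real (Ie W L \<delta> v)"
  proof -
    have "(LINT b:W|lborel. enn2real (F2 b)) = enn2real (\<integral>\<^sup>+b. ennreal (enn2real (F2 b)) \<partial>?U)"
      by (rule set_int_U) (simp_all add: F2_def F3_def)
    moreover have "(\<integral>\<^sup>+b. ennreal (enn2real (F2 b)) \<partial>?U) = Ie W L \<delta> v"
      using F2fin by (simp add: F2_def F3_def Ie_def ennreal_enn2real_if)
    ultimately show ?thesis by simp
  qed
  have "I_W W L \<delta> v = (LINT b:W|lborel. LINT c:W|lborel. LINT d:W|lborel. fr L \<delta> v b c d)"
    by (simp add: I_W_def fr_def)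
  also have "\<dots> = enn2real (Ie W L \<delta> v)" by (simp only: e1 e2 e3)
  finally show ?thesis .
qed

lemma J_eq:
  assumes v: "v \<in> W"
  shows "(LINT v1:W|lborel. w v v1 * (norm (v - v1) - norm (proj L v - proj L v1))\<^sup>2) = enn2real (Jg W L w v)"
proof -
  have "(LINT v1:W|lborel. w v v1 * (norm (v - v1) - norm (proj L v - proj L v1))\<^sup>2) = (LINT v1:W|lborel. gW W L w v v1)"
    unfolding set_lebesgue_integral_def
    by (intro Bochner_Integration.integral_cong refl) (use v in \<open>auto simp: gW_def indicator_def\<close>)
  also have "\<dots> = enn2real (Jg W L w v)"
    unfolding Jg_def by (rule set_int_U) (measurable, rule gW_nonneg')
  finally show ?thesis .
qed

lemma RHS_bound:
  assumes fin: "(\<integral>\<^sup>+v. Ie W L \<delta> v * Jg W L w v \<partial>uniform_measure lborel W) < \<top>"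
  shows "(LINT v:W|lborel. I_W W L \<delta> v * (LINT v1:W|lborel. w v v1 * (norm (v - v1) - norm (proj L v - proj L v1))\<^sup>2))
     \<le> enn2real (\<integral>\<^sup>+v. Ie W L \<delta> v * Jg W L w v \<partial>uniform_measure lborel W)"
proof -
  let ?U = "uniform_measure lborel W"
  have "(LINT v:W|lborel. I_W W L \<delta> v * (LINT v1:W|lborel. w v v1 * (norm (v - v1) - norm (proj L v - proj L v1))\<^sup>2))
      = (LINT v:W|lborel. enn2real (Ie W L \<delta> v) * enn2real (Jg W L w v))"
    by (rule set_lebesgue_integral_cong) (simp_all add: I_W_eq J_eq)
  also have "\<dots> = enn2real (\<integral>\<^sup>+v. ennreal (enn2real (Ie W L \<delta> v) * enn2real (Jg W L w v)) \<partial>?U)"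
    by (rule set_int_U) simp_all
  also have "\<dots> \<le> enn2real (\<integral>\<^sup>+v. Ie W L \<delta> v * Jg W L w v \<partial>?U)"
  proof (rule enn2real_mono[OF nn_integral_mono fin])
    fix v
    show "ennreal (enn2real (Ie W L \<delta> v) * enn2real (Jg W L w v)) \<le> Ie W L \<delta> v * Jg W L w v"
      by (simp add: ennreal_mult ennreal_enn2real_if mult_mono)
  qed
  finally show ?thesis .
qed


lemma int_expN:
  assumes c: "0 \<le> c"
  shows "integrable (ppp t W) (\<lambda>\<omega>. c * exp (real (fst \<omega>)))"
proof -
  interpret M: prob_space "PiM UNIV (\<lambda>_::nat. uniform_measure lborel W)" by (rule PiM_prob[OF Wb' W1 tpos])
  have m: "(\<lambda>\<omega>. c * exp (real (fst \<omega>))) \<in> borel_measurable (ppp t W)"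
    unfolding ppp_def by (rule meas_pmf_pair) simp
  have mm: "(\<lambda>\<omega>. ennreal (norm (c * exp (real (fst \<omega>))))) \<in> borel_measurable (measure_pmf (poisson_pmf t) \<Otimes>\<^sub>M PiM UNIV (\<lambda>_::nat. uniform_measure lborel W))"
    by (rule meas_pmf_pair) simp
  have "(\<integral>\<^sup>+\<omega>. ennreal (norm (c * exp (real (fst \<omega>)))) \<partial>ppp t W)
      = (\<integral>\<^sup>+n. \<integral>\<^sup>+X. ennreal (norm (c * exp (real n))) \<partial>PiM UNIV (\<lambda>_::nat. uniform_measure lborel W) \<partial>measure_pmf (poisson_pmf t))"
    unfolding ppp_def using M.nn_integral_fst[OF mm] by simp
  also have "\<dots> = (\<integral>\<^sup>+n. ennreal c * ennreal (exp (real n)) \<partial>measure_pmf (poisson_pmf t))"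
    using c by (intro nn_integral_cong) (simp add: M.emeasure_space_1 ennreal_mult abs_mult)
  also have "\<dots> = ennreal c * (\<integral>\<^sup>+n. ennreal (exp (real n)) \<partial>measure_pmf (poisson_pmf t))"
    by (rule nn_integral_cmult) simp
  also have "\<dots> < \<top>" using pois_exp_fin[OF tpos] by (simp add: ennreal_mult_less_top)
  finally show ?thesis by (intro integrableI_bounded[OF m]) (simp add: infinity_ennreal_def)
qed

end

lemma mult_lt_top_right: "(a::ennreal) \<noteq> 0 \<Longrightarrow> a * b < \<top> \<Longrightarrow> b < \<top>"
  by (cases "b = 0") (auto simp: ennreal_mult_less_top)

lemma abs_le_one_plus_sq: "\<bar>x::real\<bar> \<le> 1 + x\<^sup>2"
proof (cases "\<bar>x\<bar> \<le> 1")
  case True then show ?thesis using zero_le_power2[of x] by linarith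
next
  case False
  have "\<bar>x\<bar> * 1 \<le> \<bar>x\<bar> * \<bar>x\<bar>" by (rule mult_left_mono) (use False in auto)
  then have "\<bar>x\<bar> \<le> x\<^sup>2" by (simp add: power2_eq_square abs_mult_self_eq)
  then show ?thesis by linarith
qed

lemma abs_mult_le_sq: "\<bar>a * b\<bar> \<le> a\<^sup>2 + (b::real)\<^sup>2"
proof -
  have "0 \<le> (\<bar>a\<bar> - \<bar>b\<bar>)\<^sup>2" by simp
  then have "2 * (\<bar>a\<bar> * \<bar>b\<bar>) \<le> a\<^sup>2 + b\<^sup>2" by (simp add: power2_diff power2_abs)
  moreover have "0 \<le> \<bar>a\<bar> * \<bar>b\<bar>" by simp
  moreover have "\<bar>a * b\<bar> = \<bar>a\<bar> * \<bar>b\<bar>" by (rule abs_mult)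
  ultimately show ?thesis by linarith
qed

theorem mainTheorem10:
  fixes W :: "'a::euclidean_space set" and L :: "'a set"
    and t \<delta> :: real and w :: "'a \<Rightarrow> 'a \<Rightarrow> real"
  assumes "DIM('a) \<ge> 2"
    and "compact W" and "convex W" and "emeasure lborel W = 1"
    and "t > 0" and "\<delta> > 0"
    and "subspace L" and "dim L = 2"
    and "\<forall>x\<in>W. \<forall>y\<in>W. w x y > 0"
    and "(\<lambda>p. w (fst p) (snd p)) \<in> borel_measurable (restrict_space borel (W \<times> W))"
    and "stress L w \<in> borel_measurable (ppp t W)"
    and "integrable (ppp t W) (\<lambda>\<omega>. (stress L w \<omega>)\<^sup>2)"
  shows "cov (ppp t W) (cr_bar L \<delta>) (stress L w)
           \<ge> t ^ 5 / 16 * (LINT v:W|lborel. I_W W L \<delta> v *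
                (LINT v1:W|lborel. w v v1 * (norm (v - v1) - norm (proj L v - proj L v1))\<^sup>2))"
proof -
  note A = assms(2) assms(4) assms(5) assms(7) assms(9) assms(10)
  have tpos: "t > 0" by (rule assms(5))
  have Wb: "W \<in> sets borel" by (rule Wb[OF A])
  let ?M = "ppp t W"
  let ?F = "cr_bar L \<delta>"
  let ?G = "stress L w"
  let ?H = "stressW W L w"
  let ?U = "uniform_measure lborel W"
  have prob: "prob_space ?M" unfolding ppp_def
    by (rule prob_space_pair) (simp_all add: prob_space_measure_pmf PiM_prob[OF Wb assms(4) tpos])
  interpret P: prob_space ?M by (rule prob)
  have mF[measurable]: "?F \<in> borel_measurable ?M" by (rule crbar_meas[OF A])
  have mG[measurable]: "?G \<in> borel_measurable ?M" by (rule assms(11))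
  have mH[measurable]: "?H \<in> borel_measurable ?M" by (rule stressW_meas[OF A])
  have AEG: "AE \<omega> in ?M. ?G \<omega> = ?H \<omega>" by (rule stress_AE[OF A])
  have Fnn: "0 \<le> ?F \<omega>" for \<omega> by (rule crbar_nonneg[OF A])
  have Hnn: "0 \<le> ?H \<omega>" for \<omega> by (rule stressW_nonneg[OF A])
  have Fb: "?F \<omega> \<le> real (fst \<omega>) ^ 4 / 8" for \<omega>
  proof -
    have "?F \<omega> = 1/8 * (\<Sum>xs\<in>Inj 4 (fst \<omega>). fr L \<delta> (snd \<omega> (xs!0)) (snd \<omega> (xs!1)) (snd \<omega> (xs!2)) (snd \<omega> (xs!3)))"
      by (rule cr_bar_Inj'[OF A])
    also have "\<dots> \<le> 1/8 * (\<Sum>xs\<in>Inj 4 (fst \<omega>). 1)"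
      by (intro mult_left_mono sum_mono fr_le1) simp
    also have "\<dots> = real (card (Inj 4 (fst \<omega>))) / 8" by simp
    also have "\<dots> \<le> real (fst \<omega>) ^ 4 / 8"
      using card_Inj_le[of 4 "fst \<omega>"] by (simp add: divide_right_mono of_nat_le_iff[symmetric] del: of_nat_le_iff)
    finally show ?thesis .
  qed
  have F2b: "(?F \<omega>)\<^sup>2 \<le> fact 8 / 64 * exp (real (fst \<omega>))" for \<omega>
  proof -
    have "(?F \<omega>)\<^sup>2 \<le> (real (fst \<omega>) ^ 4 / 8)\<^sup>2" by (rule power_mono[OF Fb Fnn])
    also have "\<dots> = real (fst \<omega>) ^ 8 / 64" by (simp add: power2_eq_square power_add[symmetric])
    also have "\<dots> \<le> fact 8 * exp (real (fst \<omega>)) / 64" by (rule divide_right_mono[OF pow8_exp]) simp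
    finally show ?thesis by simp
  qed
  have iF2: "integrable ?M (\<lambda>\<omega>. (?F \<omega>)\<^sup>2)"
  proof (rule Bochner_Integration.integrable_bound[OF int_expN[OF A, of "fact 8 / 64"]])
    show "AE \<omega> in ?M. norm ((?F \<omega>)\<^sup>2) \<le> norm (fact 8 / 64 * exp (real (fst \<omega>)))"
    proof (rule AE_I2)
      fix \<omega> show "norm ((?F \<omega>)\<^sup>2) \<le> norm (fact 8 / 64 * exp (real (fst \<omega>)))"
        using F2b[of \<omega>] by simp
    qed
  qed simp_all
  have iH2: "integrable ?M (\<lambda>\<omega>. (?H \<omega>)\<^sup>2)"
  proof -
    have "AE \<omega> in ?M. (?G \<omega>)\<^sup>2 = (?H \<omega>)\<^sup>2" using AEG by eventually_elim simp
    then show ?thesis using assms(12) integrable_cong_AE[of "\<lambda>\<omega>. (?G \<omega>)\<^sup>2" ?M "\<lambda>\<omega>. (?H \<omega>)\<^sup>2"] by simp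
  qed
  have iF: "integrable ?M ?F"
    by (rule Bochner_Integration.integrable_bound[of _ "\<lambda>\<omega>. 1 + (?F \<omega>)\<^sup>2"]) (use iF2 abs_le_one_plus_sq in auto)
  have iH: "integrable ?M ?H"
    by (rule Bochner_Integration.integrable_bound[of _ "\<lambda>\<omega>. 1 + (?H \<omega>)\<^sup>2"]) (use iH2 abs_le_one_plus_sq in auto)
  have iFH: "integrable ?M (\<lambda>\<omega>. ?F \<omega> * ?H \<omega>)"
    by (rule Bochner_Integration.integrable_bound[of _ "\<lambda>\<omega>. (?F \<omega>)\<^sup>2 + (?H \<omega>)\<^sup>2"]) (use iF2 iH2 abs_mult_le_sq in auto)
  have EGH: "(\<integral>\<omega>. ?G \<omega> \<partial>?M) = (\<integral>\<omega>. ?H \<omega> \<partial>?M)" by (rule integral_cong_AE[OF mG mH AEG])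
  have covGH: "cov ?M ?F ?G = cov ?M ?F ?H"
    unfolding cov_def EGH
    by (rule integral_cong_AE) (use AEG in \<open>measurable, auto elim!: AE_mp\<close>)
  have cov: "cov ?M ?F ?H = (\<integral>\<omega>. ?F \<omega> * ?H \<omega> \<partial>?M) - (\<integral>\<omega>. ?F \<omega> \<partial>?M) * (\<integral>\<omega>. ?H \<omega> \<partial>?M)"
    by (rule cov_expand[OF prob iF iH iFH])
  define X where "X = (\<integral>\<^sup>+\<omega>. ennreal (?F \<omega> * ?H \<omega>) \<partial>?M)"
  define C4 where "C4 = (\<integral>\<^sup>+y. ennreal (fr L \<delta> (y 0) (y 1) (y 2) (y 3)) \<partial>PiM {..<4::nat} (\<lambda>_. ?U))"
  define D where "D = (\<integral>\<^sup>+c. Jg W L w c \<partial>?U)"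
  define C5 where "C5 = (\<integral>\<^sup>+v. Ie W L \<delta> v * Jg W L w v \<partial>?U)"
  have EFH: "(\<integral>\<omega>. ?F \<omega> * ?H \<omega> \<partial>?M) = enn2real X"
    unfolding X_def by (rule integral_eq_nn_integral) (auto intro: mult_nonneg_nonneg Fnn Hnn)
  have EF: "(\<integral>\<omega>. ?F \<omega> \<partial>?M) = 1/8 * t^4 * enn2real C4"
  proof -
    have "(\<integral>\<omega>. ?F \<omega> \<partial>?M) = enn2real (\<integral>\<^sup>+\<omega>. ennreal (?F \<omega>) \<partial>?M)"
      by (rule integral_eq_nn_integral) (auto intro: Fnn)
    then show ?thesis unfolding E_F[OF A] C4_def using tpos by (simp add: enn2real_mult)
  qed
  have EH: "(\<integral>\<omega>. ?H \<omega> \<partial>?M) = 1/2 * t^2 * enn2real D"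
  proof -
    have "(\<integral>\<omega>. ?H \<omega> \<partial>?M) = enn2real (\<integral>\<^sup>+\<omega>. ennreal (?H \<omega>) \<partial>?M)"
      by (rule integral_eq_nn_integral) (auto intro: Hnn)
    moreover have h2: "enn2real (ennreal (1/2)) = 1/2" by (rule enn2real_ennreal) simp
    moreover have ht: "enn2real (ennreal (t^2)) = t^2" by (rule enn2real_ennreal) (use tpos in simp)
    ultimately show ?thesis unfolding E_G[OF A] C2_eq[OF A] D_def enn2real_mult by (simp add: mult.assoc)
  qed
  have Xfin: "X < \<top>"
  proof -
    have "X \<noteq> \<infinity>" using integrableD(2)[OF iFH] unfolding X_def .
    then show ?thesis by (simp add: infinity_ennreal_def less_top)
  qed
  have LB: "ennreal (1/16) * (ennreal (t^6) * (C4 * D) + ennreal (t^5) * C5) \<le> X"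
    using E_FG[OF A, of \<delta>] unfolding C6_eq[OF A] C5_eq[OF A] X_def C4_def D_def C5_def .
  have LBfin: "ennreal (1/16) * (ennreal (t^6) * (C4 * D) + ennreal (t^5) * C5) < \<top>"
    using LB Xfin by (rule le_less_trans)
  have Sfin: "ennreal (t^6) * (C4 * D) + ennreal (t^5) * C5 < \<top>"
    by (rule mult_lt_top_right[OF _ LBfin]) simp
  have fin1: "ennreal (t^6) * (C4 * D) < \<top>" by (rule le_less_trans[OF _ Sfin]) simp
  have fin2: "ennreal (t^5) * C5 < \<top>" by (rule le_less_trans[OF _ Sfin]) simp
  have C5fin: "C5 < \<top>" by (rule mult_lt_top_right[OF _ fin2]) (use tpos in simp)
  have "enn2real (ennreal (1/16) * (ennreal (t^6) * (C4 * D) + ennreal (t^5) * C5))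
      = 1/16 * (t^6 * (enn2real C4 * enn2real D) + t^5 * enn2real C5)"
    using fin1 fin2 tpos by (simp add: enn2real_mult enn2real_plus)
  moreover have "enn2real (ennreal (1/16) * (ennreal (t^6) * (C4 * D) + ennreal (t^5) * C5)) \<le> enn2real X"
    by (rule enn2real_mono[OF LB Xfin])
  ultimately have main: "1/16 * (t^6 * (enn2real C4 * enn2real D) + t^5 * enn2real C5) \<le> enn2real X" by simp
  have t6: "t^6 = t^4 * t^2" by (simp add: power_add[symmetric])
  have covge: "t^5/16 * enn2real C5 \<le> cov ?M ?F ?G"
  proof -
    have "cov ?M ?F ?G = enn2real X - 1/8 * t^4 * enn2real C4 * (1/2 * t^2 * enn2real D)"
      unfolding covGH cov EFH EF EH ..
    moreover have "1/16 * (t^6 * (enn2real C4 * enn2real D) + t^5 * enn2real C5)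
       = 1/8 * t^4 * enn2real C4 * (1/2 * t^2 * enn2real D) + t^5/16 * enn2real C5"
      unfolding t6 by (simp add: field_simps)
    ultimately show ?thesis using main by linarith
  qed
  have rhs: "(LINT v:W|lborel. I_W W L \<delta> v * (LINT v1:W|lborel. w v v1 * (norm (v - v1) - norm (proj L v - proj L v1))\<^sup>2))
     \<le> enn2real C5"
    unfolding C5_def by (rule RHS_bound[OF A]) (use C5fin in \<open>simp add: C5_def\<close>)
  have "t ^ 5 / 16 * (LINT v:W|lborel. I_W W L \<delta> v * (LINT v1:W|lborel. w v v1 * (norm (v - v1) - norm (proj L v - proj L v1))\<^sup>2))
     \<le> t^5/16 * enn2real C5"
    by (rule mult_left_mono[OF rhs]) (use tpos in simp)
  then show ?thesis using covge by linarith
qed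

end
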